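(* Fix an integer $m\ge 1$ and $n\ge 0$. Let $\pi\in\Pi^{(m)}_n$ with label $L(\pi)=(a_1,a_2,\dots,a_m)$. Then exactly $a_m$ partitions of $[n+1]$ lying in $\Pi^{(m)}_{n+1}$ are obtained from $\pi$ by either adding $n+1$ as a singleton block or adding $n+1$ to an existing block of $\pi$: namely the partition obtained by adding $\{n+1\}$ as a singleton, and, for each $1\le l\le a_m-1$, the partition obtained by adding $n+1$ to block $l$ of $\pi$. Their labels are: \begin{itemize} \item adding $n+1$ as a singleton: $(a_1+1,a_2+1,\dots,a_m+1)$; \item adding $n+1$ to block $l$ with $1\le l\le a_1-1$: $(l+1,a_2,a_3,\dots,a_m)$; \item adding $n+1$ to block $l$ with $a_{j-1}\le l\le a_j-1$ for some $2\le j\le m$: $(a_1+1,\dots,a_{j-1}+1,\,l+1,\,a_{j+1},\dots,a_m)$. \end{itemize} (In particular, block $a_1$ gives $(a_1+1,a_1+1,a_3,\dots,a_m)$, block $a_2$ gives $(a_1+1,a_2+1,a_2+1,a_4,\dots,a_m)$, and block $a_m-1$ gives $(a_1+1,\dots,a_{m-1}+1,a_m)$.)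
   Context: A set partition of $[n]=\{1,\dots,n\}$ is a collection of nonempty pairwise disjoint blocks with union $[n]$ ($n=0$ gives the empty partition). Its standard representation is the graph on vertex set $[n]$ whose edges (arcs) $(i,j)$, $i<j$, join consecutive elements (in numerical order) of each block. An $m$-nesting is a set of $m$ arcs $(i_1,j_1),\dots,(i_m,j_m)$ with $i_1<i_2<\dots<i_m<j_m<j_{m-1}<\dots<j_1$ (a $1$-nesting is a single arc); a partition is $m$-nonnesting if it has no $m$-nesting. $\Pi^{(m)}_n$ denotes the set of partitions of $[n]$ with no $(m+1)$-nesting. The blocks of a partition are numbered $1,2,3,\dots$ in decreasing order of their maximal elements (block 1 contains the largest element). "Adding $n+1$ to block $l$" means forming the partition of $[n+1]$ in which block $l$ is replaced by block $l\cup\{n+1\}$. The label of $\pi\in\Pi^{(m)}_n$ is $L(\pi)=(a_1,\dots,a_m)$ where, for $1\le j\le m$, $a_j=1+$(number of blocks of $\pi$) if $\pi$ has no $j$-nesting, and otherwise $a_j=1+$(number of blocks whose maximal element lies to the right of (is greater than) the smallest vertex of the rightmost $j$-nesting), the rightmost $j$-nesting being one whose smallest vertex is as large as possible among all $j$-nestings of $\pi$. The empty partition has label $(1,\dots,1)$. *)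

theory Defs
  imports Main "HOL-Library.Disjoint_Sets"
begin

definition is_set_partition :: "nat \<Rightarrow> nat set set \<Rightarrow> bool" where
  "is_set_partition n P \<longleftrightarrow> partition_on {1..n} P"

definition arcs :: "nat set set \<Rightarrow> (nat \<times> nat) set" where
  "arcs P = {(i, j). \<exists>B\<in>P. i \<in> B \<and> j \<in> B \<and> i < j \<and> (\<forall>x\<in>B. \<not> (i < x \<and> x < j))}"

text \<open>P has a k-nesting (i_1,j_1),...,(i_k,j_k) with
i_1 < ... < i_k < j_k < ... < j_1 whose smallest vertex i_1 equals s.
Arcs are indexed 0..k-1 here.\<close>
definition has_nesting_at :: "nat set set \<Rightarrow> nat \<Rightarrow> nat \<Rightarrow> bool" where
  "has_nesting_at P k s \<longleftrightarrow> k \<ge> 1 \<and>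
     (\<exists>a b :: nat \<Rightarrow> nat.
        (\<forall>t<k. (a t, b t) \<in> arcs P) \<and>
        (\<forall>t. Suc t < k \<longrightarrow> a t < a (Suc t) \<and> b (Suc t) < b t) \<and>
        a (k - 1) < b (k - 1) \<and> a 0 = s)"

definition has_nesting :: "nat set set \<Rightarrow> nat \<Rightarrow> bool" where
  "has_nesting P k \<longleftrightarrow> (\<exists>s. has_nesting_at P k s)"

definition Pi_m :: "nat \<Rightarrow> nat \<Rightarrow> nat set set set" where
  "Pi_m m n = {P. is_set_partition n P \<and> \<not> has_nesting P (Suc m)}"

text \<open>Block number l (l \<ge> 1): blocks numbered in decreasing order of their
maximal elements, block 1 containing the largest element.\<close>
definition blk :: "nat set set \<Rightarrow> nat \<Rightarrow> nat set" where
  "blk P l = (THE B. B \<in> P \<and> card {C \<in> P. Max B \<le> Max C} = l)"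

definition add_singleton :: "nat set set \<Rightarrow> nat \<Rightarrow> nat set set" where
  "add_singleton P n = insert {Suc n} P"

definition add_to_block :: "nat set set \<Rightarrow> nat \<Rightarrow> nat \<Rightarrow> nat set set" where
  "add_to_block P n l = insert (insert (Suc n) (blk P l)) (P - {blk P l})"

definition extensions :: "nat set set \<Rightarrow> nat \<Rightarrow> nat set set set" where
  "extensions P n = insert (add_singleton P n)
      {insert (insert (Suc n) B) (P - {B}) | B. B \<in> P}"

definition lab :: "nat set set \<Rightarrow> nat \<Rightarrow> nat" where
  "lab P j = (if \<not> has_nesting P j then 1 + card P
              else 1 + card {B \<in> P. Max B > Max {s. has_nesting_at P j s}})"

end

theory Submission
  imports Defs
begin


lemma isp_def': "is_set_partition n P \<longleftrightarrow> \<Union>P = {1..n} \<and> disjoint P \<and> {} \<notin> P"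
  by (simp add: is_set_partition_def partition_on_def)

lemma isp_finite: "is_set_partition n P \<Longrightarrow> finite P"
  by (metis finite_UnionD finite_atLeastAtMost isp_def')

lemma isp_sub: "is_set_partition n P \<Longrightarrow> B \<in> P \<Longrightarrow> B \<subseteq> {1..n}"
  unfolding isp_def' by blast

lemma isp_fin: "is_set_partition n P \<Longrightarrow> B \<in> P \<Longrightarrow> finite B"
  by (rule finite_subset[OF isp_sub]) auto

lemma isp_ne: "is_set_partition n P \<Longrightarrow> B \<in> P \<Longrightarrow> B \<noteq> {}"
  unfolding isp_def' by blast

lemma isp_disj: "is_set_partition n P \<Longrightarrow> B \<in> P \<Longrightarrow> C \<in> P \<Longrightarrow> x \<in> B \<Longrightarrow> x \<in> C \<Longrightarrow> B = C"
  unfolding isp_def' disjoint_def by blast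

lemma isp_Max_in: "is_set_partition n P \<Longrightarrow> B \<in> P \<Longrightarrow> Max B \<in> B"
  using isp_fin isp_ne Max_in by blast

lemma isp_Max_ge: "is_set_partition n P \<Longrightarrow> B \<in> P \<Longrightarrow> x \<in> B \<Longrightarrow> x \<le> Max B"
  using isp_fin Max_ge by blast

lemma isp_Max_le: "is_set_partition n P \<Longrightarrow> B \<in> P \<Longrightarrow> Max B \<le> n"
  using isp_Max_in isp_sub by fastforce

lemma isp_Max_inj: "is_set_partition n P \<Longrightarrow> B \<in> P \<Longrightarrow> C \<in> P \<Longrightarrow> Max B = Max C \<Longrightarrow> B = C"
  by (metis isp_Max_in isp_disj)

lemma isp_notin: "is_set_partition n P \<Longrightarrow> B \<in> P \<Longrightarrow> Suc n \<notin> B"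
  using isp_sub by fastforce

section \<open>Arcs\<close>

definition barcs :: "nat set \<Rightarrow> (nat \<times> nat) set" where
  "barcs B = {(i, j). i \<in> B \<and> j \<in> B \<and> i < j \<and> (\<forall>x\<in>B. \<not> (i < x \<and> x < j))}"

lemma arcs_Union: "arcs P = (\<Union>B\<in>P. barcs B)"
  unfolding arcs_def barcs_def by auto

lemma barcs_single: "barcs {x} = {}" unfolding barcs_def by auto

lemma barcs_insert_top: assumes "finite B" "B \<noteq> {}" "\<forall>x\<in>B. x < N"
  shows "barcs (insert N B) = insert (Max B, N) (barcs B)"
proof (intro set_eqI iffI)
  fix p assume "p \<in> barcs (insert N B)"
  then obtain i j where p: "p = (i,j)" "i \<in> insert N B" "j \<in> insert N B" "i < j"
     "\<forall>x\<in>insert N B. \<not> (i < x \<and> x < j)"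
    unfolding barcs_def by auto
  show "p \<in> insert (Max B, N) (barcs B)"
  proof (cases "j = N")
    case True
    then have "i \<in> B" using p assms(3) by auto
    moreover have "\<forall>x\<in>B. x \<le> i" using p True assms(3) by (meson insertCI not_le)
    ultimately have "Max B = i" using assms by (meson Max_eqI)
    then show ?thesis using p True by simp
  next
    case False
    then have "j \<in> B" using p by auto
    moreover have "i \<in> B" using p \<open>j\<in>B\<close> assms(3) by auto
    ultimately show ?thesis using p unfolding barcs_def by auto
  qed
next
  fix p assume "p \<in> insert (Max B, N) (barcs B)"
  then show "p \<in> barcs (insert N B)"
  proof
    assume "p = (Max B, N)"
    have "Max B \<in> B" using assms Max_in by auto
    moreover have "\<forall>x\<in>B. x \<le> Max B" using assms by auto
    ultimately show ?thesis using \<open>p = _\<close> assms unfolding barcs_def by fastforce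
  next
    assume "p \<in> barcs B" then show ?thesis using assms unfolding barcs_def by auto
  qed
qed

lemma arcs_single: "arcs (insert {x} P) = arcs P"
  by (simp add: arcs_Union barcs_single)

lemma arcs_addB: assumes "finite B" "B \<noteq> {}" "\<forall>x\<in>B. x < N" "B \<in> P"
  shows "arcs (insert (insert N B) (P - {B})) = insert (Max B, N) (arcs P)"
proof -
  have "arcs P = barcs B \<union> (\<Union>C\<in>P-{B}. barcs C)" using assms(4) by (auto simp: arcs_Union)
  then show ?thesis using barcs_insert_top[OF assms(1-3)] by (auto simp: arcs_Union)
qed

lemma arcs_isp: "is_set_partition n P \<Longrightarrow> (i,j) \<in> arcs P \<Longrightarrow> \<exists>B\<in>P. i \<in> B \<and> j \<in> B \<and> i < j"
  unfolding arcs_def by auto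

section \<open>Nestings\<close>

definition nest :: "(nat \<times> nat) set \<Rightarrow> nat \<Rightarrow> nat \<Rightarrow> bool" where
  "nest A k s \<longleftrightarrow> k \<ge> 1 \<and>
     (\<exists>a b :: nat \<Rightarrow> nat.
        (\<forall>t<k. (a t, b t) \<in> A) \<and>
        (\<forall>t. Suc t < k \<longrightarrow> a t < a (Suc t) \<and> b (Suc t) < b t) \<and>
        a (k - 1) < b (k - 1) \<and> a 0 = s)"

lemma hna_nest: "has_nesting_at P k s = nest (arcs P) k s"
  unfolding has_nesting_at_def nest_def by simp

lemma nest_drop: assumes "nest A k s" "k \<ge> 2" shows "\<exists>t>s. nest A (k-1) t"
proof -
  obtain a b where h: "\<forall>t<k. (a t, b t) \<in> A" "\<forall>t. Suc t < k \<longrightarrow> a t < a (Suc t) \<and> b (Suc t) < b t"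
      "a (k - 1) < b (k - 1)" "a 0 = s"
    using assms(1) unfolding nest_def by blast
  have "\<exists>a' b'. (\<forall>t<k-1. (a' t, b' t) \<in> A) \<and>
        (\<forall>t. Suc t < k-1 \<longrightarrow> a' t < a' (Suc t) \<and> b' (Suc t) < b' t) \<and>
        a' (k - 1 - 1) < b' (k - 1 - 1) \<and> a' 0 = a 1"
    apply (rule exI[of _ "\<lambda>t. a (Suc t)"], rule exI[of _ "\<lambda>t. b (Suc t)"])
    using h assms(2) by (auto simp: Suc_diff_Suc numeral_2_eq_2)
  then have "nest A (k-1) (a 1)" using assms(2) unfolding nest_def by auto
  moreover have "a 1 > s" using h(2,4) assms(2) by auto
  ultimately show ?thesis by blast
qed



lemma nest_mono: "nest A k s \<Longrightarrow> A \<subseteq> A' \<Longrightarrow> nest A' k s"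
  unfolding nest_def by blast

lemma nest_insert:
  assumes A: "\<forall>(x,y)\<in>A. y < N" and MN: "M < N"
  shows "nest (insert (M,N) A) k s \<longleftrightarrow>
     nest A k s \<or> (k \<ge> 1 \<and> s = M \<and> (k = 1 \<or> (\<exists>t>M. nest A (k-1) t)))"
proof
  have A': "\<And>x y. (x,y)\<in>A \<Longrightarrow> y < N" using A by blast
  assume "nest (insert (M,N) A) k s"
  then obtain a b where h1: "k \<ge> 1" and h2: "\<And>t. t<k \<Longrightarrow> (a t, b t) \<in> insert (M,N) A"
     and h3: "\<And>t. Suc t < k \<Longrightarrow> a t < a (Suc t) \<and> b (Suc t) < b t"
     and h4: "a (k - 1) < b (k - 1)" and h5: "a 0 = s"
    unfolding nest_def by blast
  have bN: "b t \<le> N" if "t < k" for t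
  proof -
    have "(a t, b t) = (M,N) \<or> (a t, b t) \<in> A" using h2[OF that] by simp
    then show ?thesis using A'[of "a t" "b t"] by auto
  qed
  show "nest A k s \<or> (k \<ge> 1 \<and> s = M \<and> (k = 1 \<or> (\<exists>t>M. nest A (k-1) t)))"
  proof (cases "\<forall>t<k. (a t, b t) \<in> A")
    case True
    have "nest A k s" unfolding nest_def
      apply (rule conjI[OF h1])
      apply (rule exI[of _ a], rule exI[of _ b])
      using True h3 h4 h5 by blast
    then show ?thesis by simp
  next
    case False
    then obtain t0 where t0: "t0 < k" "(a t0, b t0) \<notin> A" by blast
    then have t0': "a t0 = M" "b t0 = N" using h2[OF t0(1)] by auto
    have "t0 = 0"
    proof (rule ccontr)
      assume "t0 \<noteq> 0"
      then obtain u where u: "t0 = Suc u" by (cases t0) auto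
      then have "b t0 < b u" "u < k" using h3[of u] t0(1) by auto
      then show False using bN[of u] t0' by simp
    qed
    then have sM: "s = M" using t0' h5 by simp
    have inA: "(a (Suc t), b (Suc t)) \<in> A" if "Suc t < k" for t
    proof -
      have "b (Suc t) < N" using h3[OF that] bN[of t] that by simp
      then show ?thesis using h2[OF that] by auto
    qed
    show ?thesis
    proof (cases "k = 1")
      case True then show ?thesis using sM h1 by simp
    next
      case False
      then have k2: "k \<ge> 2" using h1 by simp
      have e: "Suc (k - 1 - 1) = k - 1" using k2 by simp
      have "\<exists>a' b'. (\<forall>t<k-1. (a' t, b' t) \<in> A) \<and>
        (\<forall>t. Suc t < k-1 \<longrightarrow> a' t < a' (Suc t) \<and> b' (Suc t) < b' t) \<and>
        a' (k - 1 - 1) < b' (k - 1 - 1) \<and> a' 0 = a 1"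
        apply (rule exI[of _ "\<lambda>t. a (Suc t)"], rule exI[of _ "\<lambda>t. b (Suc t)"])
        apply (intro conjI allI impI)
        subgoal for t using inA[of t] by simp
        subgoal for t using h3[of "Suc t"] by simp
        subgoal for t using h3[of "Suc t"] by simp
        subgoal using h4 e by simp
        subgoal by simp
        done
      then have "nest A (k-1) (a 1)" using k2 unfolding nest_def by auto
      moreover have "a 1 > M" using h3[of 0] h5 sM k2 by simp
      ultimately show ?thesis using sM h1 by blast
    qed
  qed
next
  assume "nest A k s \<or> (k \<ge> 1 \<and> s = M \<and> (k = 1 \<or> (\<exists>t>M. nest A (k-1) t)))"
  then consider "nest A k s" | "k = 1" "s = M" | t where "k \<ge> 2" "s = M" "t > M" "nest A (k-1) t"
  proof -
    assume H: "nest A k s \<or> (k \<ge> 1 \<and> s = M \<and> (k = 1 \<or> (\<exists>t>M. nest A (k-1) t)))"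
      and c1: "nest A k s \<Longrightarrow> thesis" and c2: "k = 1 \<Longrightarrow> s = M \<Longrightarrow> thesis"
      and c3: "\<And>t. k \<ge> 2 \<Longrightarrow> s = M \<Longrightarrow> t > M \<Longrightarrow> nest A (k-1) t \<Longrightarrow> thesis"
    show thesis
    proof (cases "nest A k s")
      case True then show ?thesis by (rule c1)
    next
      case False
      then have k1: "k \<ge> 1" and sM: "s = M" and r: "k = 1 \<or> (\<exists>t>M. nest A (k-1) t)" using H by auto
      show ?thesis
      proof (cases "k = 1")
        case True then show ?thesis using c2 sM by blast
      next
        case False
        then obtain t where "t > M" "nest A (k-1) t" using r by blast
        then show ?thesis using c3[of t] False k1 sM by simp
      qed
    qed
  qed
  then show "nest (insert (M,N) A) k s"
  proof cases
    case 1 then show ?thesis using nest_mono by blast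
  next
    case 2 then show ?thesis unfolding nest_def using MN
      by (intro conjI exI[of _ "\<lambda>_. M"] exI[of _ "\<lambda>_. N"]) auto
  next
    case 3
    then obtain a b where h: "\<forall>t<k-1. (a t, b t) \<in> A"
      "\<forall>t. Suc t < k-1 \<longrightarrow> a t < a (Suc t) \<and> b (Suc t) < b t"
      "a (k - 1 - 1) < b (k - 1 - 1)" "a 0 = t"
      unfolding nest_def by blast
    have b0: "b 0 < N" using h(1) A 3(1) by fastforce
    define a' where "a' x = (if x = 0 then M else a (x - 1))" for x
    define b' where "b' x = (if x = 0 then N else b (x - 1))" for x
    have "\<forall>t<k. (a' t, b' t) \<in> insert (M,N) A"
    proof (intro allI impI)
      fix u assume "u < k"
      then show "(a' u, b' u) \<in> insert (M,N) A"
        using h(1) by (cases u) (auto simp: a'_def b'_def)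
    qed
    moreover have "\<forall>u. Suc u < k \<longrightarrow> a' u < a' (Suc u) \<and> b' (Suc u) < b' u"
    proof (intro allI impI)
      fix u assume "Suc u < k"
      then show "a' u < a' (Suc u) \<and> b' (Suc u) < b' u"
        using h(2,4) b0 3(3) by (cases u) (auto simp: a'_def b'_def)
    qed
    moreover have "a' (k - 1) < b' (k - 1)"
      using h(3) 3(1) by (auto simp: a'_def b'_def)
    moreover have "a' 0 = s" using 3 by (simp add: a'_def)
    ultimately show ?thesis using 3(1) unfolding nest_def by auto
  qed
qed


lemma nest_arc: "nest A k s \<Longrightarrow> \<exists>b. (s,b) \<in> A"
proof -
  assume "nest A k s"
  then obtain a b where "k \<ge> 1" "\<forall>t<k. (a t, b t) \<in> A" "a 0 = s" unfolding nest_def by blast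
  then have "(a 0, b 0) \<in> A" by auto
  then show ?thesis using \<open>a 0 = s\<close> by auto
qed

section \<open>Counting\<close>

definition S :: "nat set set \<Rightarrow> nat \<Rightarrow> nat set" where "S P j = {s. has_nesting_at P j s}"
definition cnt :: "nat set set \<Rightarrow> nat \<Rightarrow> nat" where "cnt P x = card {C\<in>P. x < Max C}"
definition rk :: "nat set set \<Rightarrow> nat set \<Rightarrow> nat" where "rk P B = card {C\<in>P. Max B \<le> Max C}"

lemma lab_S: "lab P j = (if S P j = {} then 1 + card P else 1 + cnt P (Max (S P j)))"
  unfolding lab_def has_nesting_def S_def cnt_def by auto

lemma has_nesting_S: "has_nesting P j \<longleftrightarrow> S P j \<noteq> {}"
  by (simp add: has_nesting_def S_def)

lemma blk_rk_def: "blk P l = (THE B. B \<in> P \<and> rk P B = l)"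
  unfolding blk_def rk_def by simp

context fixes n P assumes isp: "is_set_partition n P"
begin

lemma finP: "finite P" using isp_finite[OF isp] .

lemma S_elem: assumes "s \<in> S P j" shows "\<exists>B\<in>P. s \<in> B \<and> s < Max B"
proof -
  have "nest (arcs P) j s" using assms by (simp add: S_def hna_nest)
  then obtain b where "(s, b) \<in> arcs P" using nest_arc by blast
  then obtain B where B: "B \<in> P" "s \<in> B" "b \<in> B" "s < b" using arcs_isp[OF isp] by blast
  then have "b \<le> Max B" using isp_Max_ge[OF isp] by blast
  then show ?thesis using B by auto
qed

lemma S_le: "s \<in> S P j \<Longrightarrow> s \<le> n"
  using S_elem isp_Max_le[OF isp] by fastforce

lemma S_fin: "finite (S P j)"
  by (rule finite_subset[of _ "{..n}"]) (auto dest: S_le)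

lemma S_notmax: "s \<in> S P j \<Longrightarrow> C \<in> P \<Longrightarrow> s \<noteq> Max C"
proof
  assume "s \<in> S P j" "C \<in> P" "s = Max C"
  then obtain B where B: "B \<in> P" "s \<in> B" "s < Max B" using S_elem by blast
  have "Max C \<in> C" using isp_Max_in[OF isp \<open>C \<in> P\<close>] .
  then have "B = C" using isp_disj[OF isp B(1) \<open>C\<in>P\<close> B(2)] \<open>s = Max C\<close> by simp
  then show False using B(3) \<open>s = Max C\<close> by simp
qed

lemma S_drop: "s \<in> S P j \<Longrightarrow> j \<ge> 2 \<Longrightarrow> \<exists>t>s. t \<in> S P (j-1)"
  unfolding S_def hna_nest using nest_drop by simp

lemma rk_ge1: "B \<in> P \<Longrightarrow> rk P B \<ge> 1"
proof -
  assume "B \<in> P"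
  then have "B \<in> {C\<in>P. Max B \<le> Max C}" by simp
  moreover have "finite {C\<in>P. Max B \<le> Max C}" using finP by simp
  ultimately show ?thesis unfolding rk_def by (metis card_0_eq empty_iff less_one not_le)
qed

lemma rk_le: "rk P B \<le> card P"
  unfolding rk_def using finP by (simp add: card_mono)

lemma rk_strict: assumes "B \<in> P" "C \<in> P" "Max B < Max C" shows "rk P C < rk P B"
proof -
  have "{D\<in>P. Max C \<le> Max D} \<subset> {D\<in>P. Max B \<le> Max D}" using assms by force
  then show ?thesis unfolding rk_def using finP by (simp add: psubset_card_mono)
qed

lemma rk_inj: "inj_on (rk P) P"
proof (rule inj_onI)
  fix B C assume BC: "B \<in> P" "C \<in> P" "rk P B = rk P C"
  show "B = C"
  proof (rule ccontr)
    assume "B \<noteq> C"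
    then have "Max B \<noteq> Max C" using isp_Max_inj[OF isp BC(1,2)] by blast
    then show False using rk_strict[OF BC(1,2)] rk_strict[OF BC(2,1)] BC(3) by linarith
  qed
qed

lemma rk_img: "rk P ` P = {1..card P}"
proof -
  have sub: "rk P ` P \<subseteq> {1..card P}" using rk_ge1 rk_le by auto
  have "card (rk P ` P) = card P" using card_image[OF rk_inj] .
  then have "card (rk P ` P) = card {1..card P}" by simp
  then show ?thesis using card_subset_eq[OF _ sub] by simp
qed

lemma blk_rk: "B \<in> P \<Longrightarrow> blk P (rk P B) = B"
  unfolding blk_rk_def
  by (rule the_equality) (auto dest: inj_onD[OF rk_inj])

lemma blk_props: assumes "1 \<le> l" "l \<le> card P" shows "blk P l \<in> P" "rk P (blk P l) = l"
proof -
  have "l \<in> rk P ` P" using rk_img assms by auto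
  then obtain B where "B \<in> P" "l = rk P B" by blast
  then show "blk P l \<in> P" "rk P (blk P l) = l" using blk_rk by auto
qed

lemma cnt_Max: assumes "B \<in> P" shows "cnt P (Max B) = rk P B - 1"
proof -
  have "{C\<in>P. Max B < Max C} = {C\<in>P. Max B \<le> Max C} - {B}"
    using isp_Max_inj[OF isp assms] assms by force
  then show ?thesis unfolding cnt_def rk_def using assms finP by (simp add: card_Diff_singleton)
qed

lemma cnt_iff: assumes "B \<in> P" "\<forall>C\<in>P. x \<noteq> Max C" shows "x < Max B \<longleftrightarrow> rk P B \<le> cnt P x"
proof
  assume "x < Max B"
  then have "{C\<in>P. Max B \<le> Max C} \<subseteq> {C\<in>P. x < Max C}" by auto
  then show "rk P B \<le> cnt P x" unfolding rk_def cnt_def using finP by (simp add: card_mono)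
next
  assume a: "rk P B \<le> cnt P x"
  show "x < Max B"
  proof (rule ccontr)
    assume "\<not> x < Max B"
    then have "Max B < x" using assms by (metis linorder_neqE_nat)
    then have "{C\<in>P. x < Max C} \<subseteq> {C\<in>P. Max B \<le> Max C} - {B}" by auto
    then have "cnt P x \<le> card ({C\<in>P. Max B \<le> Max C} - {B})" unfolding cnt_def using finP by (simp add: card_mono)
    also have "\<dots> = rk P B - 1" unfolding rk_def using assms(1) finP by (simp add: card_Diff_singleton)
    finally show False using a rk_ge1[OF assms(1)] by linarith
  qed
qed

lemma cnt_le: "cnt P x \<le> card P"
  unfolding cnt_def using finP by (simp add: card_mono)

lemma cnt_anti: "x \<le> y \<Longrightarrow> cnt P y \<le> cnt P x"
  unfolding cnt_def using finP by (intro card_mono) auto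

lemma lab_le: "lab P j \<le> card P + 1"
  using cnt_le by (simp add: lab_S)

lemma lab_ge: "lab P j \<ge> 1"
  by (simp add: lab_S)

lemma lab_mono1: assumes "k \<ge> 1" shows "lab P k \<le> lab P (Suc k)"
proof (cases "S P (Suc k) = {}")
  case True then show ?thesis using lab_le by (simp add: lab_S[of P "Suc k"])
next
  case False
  define s where "s = Max (S P (Suc k))"
  have "s \<in> S P (Suc k)" using False S_fin s_def by simp
  then obtain t where t: "t > s" "t \<in> S P k" using S_drop[of s "Suc k"] assms by auto
  then have ne: "S P k \<noteq> {}" by auto
  have "t \<le> Max (S P k)" using t S_fin by simp
  then have "cnt P (Max (S P k)) \<le> cnt P s" using t cnt_anti by simp
  then show ?thesis using False ne by (simp add: lab_S s_def)
qed

lemma lab_mono: assumes "1 \<le> i" "i \<le> j" shows "lab P i \<le> lab P j"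
  using assms(2)
proof (induction j rule: dec_induct)
  case base then show ?case by simp
next
  case (step k) then show ?case using lab_mono1[of k] assms(1) by linarith
qed

lemma cond_iff: assumes "B \<in> P" shows "(\<exists>t>Max B. t \<in> S P j) \<longleftrightarrow> lab P j \<le> rk P B"
proof (cases "S P j = {}")
  case True then show ?thesis using rk_le[of B] by (simp add: lab_S)
next
  case False
  define s where "s = Max (S P j)"
  have s: "s \<in> S P j" using False S_fin s_def by simp
  have "(\<exists>t>Max B. t \<in> S P j) \<longleftrightarrow> Max B < s"
  proof
    assume "\<exists>t>Max B. t \<in> S P j"
    then obtain t where "t > Max B" "t \<in> S P j" by blast
    moreover have "t \<le> s" using \<open>t \<in> S P j\<close> S_fin s_def by simp
    ultimately show "Max B < s" by simp
  next
    assume "Max B < s" then show "\<exists>t>Max B. t \<in> S P j" using s by blast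
  qed
  also have "\<dots> \<longleftrightarrow> \<not> s < Max B" using S_notmax[OF s assms] by auto
  also have "\<dots> \<longleftrightarrow> \<not> rk P B \<le> cnt P s" using cnt_iff[OF assms] S_notmax[OF s] by blast
  also have "\<dots> \<longleftrightarrow> lab P j \<le> rk P B" using False by (simp add: lab_S s_def not_le Suc_le_eq)
  finally show ?thesis .
qed

end



definition QB :: "nat \<Rightarrow> nat set set \<Rightarrow> nat set \<Rightarrow> nat set set" where
  "QB n P B = insert (insert (Suc n) B) (P - {B})"

context fixes n P assumes isp: "is_set_partition n P"
begin

lemma UP: "\<Union>P = {1..n}" using isp unfolding isp_def' by blast

lemma Q0_isp: "is_set_partition (Suc n) (insert {Suc n} P)"
proof -
  have nb: "Suc n \<notin> B" if "B \<in> P" for B using isp_notin[OF isp that] .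
  have "\<Union>(insert {Suc n} P) = insert (Suc n) (\<Union>P)" by simp
  also have "\<dots> = {1..Suc n}" using UP by auto
  finally have u: "\<Union>(insert {Suc n} P) = {1..Suc n}" .
  have "disjoint (insert {Suc n} P)" unfolding disjoint_def
    using nb isp_disj[OF isp] by blast
  moreover have "{} \<notin> insert {Suc n} P" using isp_ne[OF isp] by blast
  ultimately show ?thesis using u by (simp add: isp_def')
qed

lemma Q0_S: "S (insert {Suc n} P) j = S P j"
  by (simp add: S_def hna_nest arcs_single)

lemma Q0_notin: "{Suc n} \<notin> P" using isp_notin[OF isp] by blast

lemma Q0_card: "card (insert {Suc n} P) = card P + 1"
  using Q0_notin finP[OF isp] by simp

lemma Q0_cnt: assumes "x \<le> n" shows "cnt (insert {Suc n} P) x = cnt P x + 1"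
proof -
  have "{C \<in> insert {Suc n} P. x < Max C} = insert {Suc n} {C\<in>P. x < Max C}" using assms by auto
  then show ?thesis unfolding cnt_def using Q0_notin finP[OF isp] by simp
qed

lemma Q0_lab: "lab (insert {Suc n} P) j = lab P j + 1"
proof (cases "S P j = {}")
  case True then show ?thesis by (simp add: lab_S Q0_S Q0_card)
next
  case False
  then have "Max (S P j) \<in> S P j" using S_fin[OF isp] by simp
  then have "Max (S P j) \<le> n" using S_le[OF isp] by blast
  then show ?thesis using False by (simp add: lab_S Q0_S Q0_cnt)
qed

context fixes B assumes BP: "B \<in> P"
begin


lemma B'_notin: "insert (Suc n) B \<notin> P"
  using isp_notin[OF isp] by blast

lemma QB_isp: "is_set_partition (Suc n) (QB n P B)"
proof -
  have nb: "Suc n \<notin> C" if "C \<in> P" for C using isp_notin[OF isp that] .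
  have "\<Union>(QB n P B) = insert (Suc n) (B \<union> \<Union>(P - {B}))" unfolding QB_def by simp
  also have "B \<union> \<Union>(P - {B}) = \<Union>P" using BP by blast
  also have "insert (Suc n) (\<Union>P) = {1..Suc n}" using UP by auto
  finally have u: "\<Union>(QB n P B) = {1..Suc n}" .
  have "disjoint (QB n P B)" unfolding disjoint_def QB_def
  proof (intro ballI impI)
    fix C D assume C: "C \<in> insert (insert (Suc n) B) (P - {B})"
      and D: "D \<in> insert (insert (Suc n) B) (P - {B})" and "C \<noteq> D"
    show "C \<inter> D = {}"
    proof (rule ccontr)
      assume "C \<inter> D \<noteq> {}"
      then obtain x where x: "x \<in> C" "x \<in> D" by blast
      show False
      proof (cases "C = insert (Suc n) B")
        case True
        then have "D \<in> P" "D \<noteq> B" using D \<open>C \<noteq> D\<close> by auto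
        then show False using x True nb isp_disj[OF isp BP] by auto
      next
        case False
        then have CP: "C \<in> P" "C \<noteq> B" using C by auto
        show False
        proof (cases "D = insert (Suc n) B")
          case True
          then show False using x CP nb isp_disj[OF isp BP] by auto
        next
          case False
          then have "D \<in> P" using D by auto
          then show False using x CP(1) \<open>C \<noteq> D\<close> isp_disj[OF isp] by blast
        qed
      qed
    qed
  qed
  moreover have "{} \<notin> (QB n P B)" unfolding QB_def using isp_ne[OF isp] by blast
  ultimately show ?thesis using u by (simp add: isp_def')
qed

lemma QB_arcs: "arcs (QB n P B) = insert (Max B, Suc n) (arcs P)"
  unfolding QB_def
proof (rule arcs_addB)
  show "finite B" using isp_fin[OF isp BP] .
  show "B \<noteq> {}" using isp_ne[OF isp BP] .
  show "\<forall>x\<in>B. x < Suc n" using isp_sub[OF isp BP] by auto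
qed (rule BP)

lemma QB_S: assumes "j \<ge> 1"
  shows "S (QB n P B) j = (if j = 1 \<or> (\<exists>t>Max B. t \<in> S P (j-1)) then insert (Max B) (S P j) else S P j)"
proof -
  have A: "\<forall>(x,y)\<in>arcs P. y < Suc n"
  proof
    fix p assume "p \<in> arcs P"
    then obtain x y where p: "p = (x,y)" "(x,y) \<in> arcs P" by (cases p) auto
    then obtain C where "C \<in> P" "y \<in> C" using arcs_isp[OF isp] by blast
    then have "y \<le> n" using isp_sub[OF isp \<open>C \<in> P\<close>] by auto
    then show "case p of (x,y) \<Rightarrow> y < Suc n" using p by simp
  qed
  have MN: "Max B < Suc n" using isp_Max_le[OF isp BP] by simp
  have "\<And>s. s \<in> S (QB n P B) j \<longleftrightarrow> s \<in> (if j = 1 \<or> (\<exists>t>Max B. t \<in> S P (j-1)) then insert (Max B) (S P j) else S P j)"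
    unfolding S_def hna_nest QB_arcs nest_insert[OF A MN] using assms by auto
  then show ?thesis by blast
qed

lemma QB_card: "card (QB n P B) = card P"
proof -
  have "card (QB n P B) = card (P - {B}) + 1" unfolding QB_def using B'_notin finP[OF isp] by simp
  moreover have "card P > 0" using BP finP[OF isp] by (auto simp: card_gt_0_iff)
  moreover have "card (P - {B}) = card P - 1" using card_Diff_singleton[OF BP] .
  ultimately show ?thesis by linarith
qed

lemma MaxB': "Max (insert (Suc n) B) = Suc n"
proof -
  have "finite B" "\<forall>x\<in>B. x \<le> Suc n" using isp_fin[OF isp BP] isp_sub[OF isp BP] by auto
  then show ?thesis by (intro Max_eqI) auto
qed

lemma QB_cnt: assumes "x \<le> n" shows "cnt (QB n P B) x = (if x < Max B then cnt P x else cnt P x + 1)"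
proof -
  let ?X = "{C\<in>P. x < Max C}"
  have e: "{C\<in>(QB n P B). x < Max C} = insert (insert (Suc n) B) (?X - {B})"
    unfolding QB_def using assms MaxB' by auto
  have nin: "insert (Suc n) B \<notin> ?X - {B}" using B'_notin by blast
  have fX: "finite ?X" using finP[OF isp] by simp
  show ?thesis
  proof (cases "x < Max B")
    case True
    then have "B \<in> ?X" using BP by simp
    then have "card ?X > 0" using fX by (auto simp: card_gt_0_iff)
    moreover have "card (?X - {B}) = card ?X - 1" using card_Diff_singleton[OF \<open>B \<in> ?X\<close>] .
    ultimately have "card (?X - {B}) + 1 = card ?X" by linarith
    then show ?thesis unfolding cnt_def e using nin fX True by simp
  next
    case False
    then have "?X - {B} = ?X" by auto
    then show ?thesis unfolding cnt_def e using nin fX False by simp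
  qed
qed

lemma QB_lab: assumes "j \<ge> 1"
  shows "lab (QB n P B) j = (if (if j = 1 then 1 else lab P (j-1)) \<le> rk P B
     then (if rk P B < lab P j then rk P B + 1 else lab P j + 1) else lab P j)"
proof -
  define r where "r = rk P B"
  define M where "M = Max B"
  define cond where "cond = (j = 1 \<or> (\<exists>t>M. t \<in> S P (j-1)))"
  have r1: "r \<ge> 1" using rk_ge1[OF isp BP] r_def by simp
  have Mn: "M \<le> n" using isp_Max_le[OF isp BP] M_def by simp
  have cM: "cnt (QB n P B) M = r" using QB_cnt[OF Mn] cnt_Max[OF isp BP] r1 by (simp add: M_def r_def)
  have cc: "cond \<longleftrightarrow> (if j = 1 then 1 else lab P (j-1)) \<le> r"
  proof (cases "j = 1")
    case True then show ?thesis using r1 cond_def by simp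
  next
    case False then show ?thesis using cond_iff[OF isp BP, of "j-1"] by (simp add: cond_def M_def r_def)
  qed
  have SQ: "S (QB n P B) j = (if cond then insert M (S P j) else S P j)"
    using QB_S[OF assms] unfolding cond_def M_def by auto
  have goal: "lab (QB n P B) j = (if cond then (if r < lab P j then r + 1 else lab P j + 1) else lab P j)"
  proof (cases cond)
    case True
    show ?thesis
    proof (cases "S P j = {}")
      case e: True
      then have "lab P j = card P + 1" by (simp add: lab_S)
      moreover have "r \<le> card P" using rk_le[OF isp] r_def by simp
      ultimately show ?thesis using True e SQ cM by (simp add: lab_S)
    next
      case ne: False
      define s where "s = Max (S P j)"
      have s: "s \<in> S P j" using ne S_fin[OF isp] s_def by simp
      have sn: "s \<le> n" using S_le[OF isp s] .
      have sM: "s \<noteq> M" using S_notmax[OF isp s BP] M_def by simp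
      have Mx: "Max (insert M (S P j)) = max M s" using ne S_fin[OF isp] s_def by simp
      have ci: "s < M \<longleftrightarrow> r \<le> cnt P s" using cnt_iff[OF isp BP] S_notmax[OF isp s] M_def r_def by blast
      have lP: "lab P j = 1 + cnt P s" using ne by (simp add: lab_S s_def)
      show ?thesis
      proof (cases "s < M")
        case True
        then have "Max (insert M (S P j)) = M" using Mx by simp
        then show ?thesis using \<open>cond\<close> SQ cM ci True lP by (simp add: lab_S)
      next
        case False
        then have "M < s" using sM by simp
        then have "Max (insert M (S P j)) = s" using Mx by simp
        moreover have "cnt (QB n P B) s = cnt P s + 1" using QB_cnt[OF sn] \<open>M < s\<close> M_def by simp
        ultimately show ?thesis using \<open>cond\<close> SQ ci False lP by (simp add: lab_S)
      qed
    qed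
  next
    case False
    then have j2: "j \<ge> 2" using assms cond_def by auto
    show ?thesis
    proof (cases "S P j = {}")
      case e: True
      then show ?thesis using False SQ QB_card by (simp add: lab_S)
    next
      case ne: False
      define s where "s = Max (S P j)"
      have s: "s \<in> S P j" using ne S_fin[OF isp] s_def by simp
      have sn: "s \<le> n" using S_le[OF isp s] .
      obtain t where t: "t > s" "t \<in> S P (j-1)" using S_drop[OF isp s j2] by blast
      then have "t \<le> M" using False cond_def by (meson not_le)
      then have "s < M" using t by simp
      then have "cnt (QB n P B) s = cnt P s" using QB_cnt[OF sn] M_def by simp
      then show ?thesis using False SQ ne by (simp add: lab_S s_def)
    qed
  qed
  show ?thesis using goal cc by (simp add: r_def)
qed

lemma QB_Pi: assumes "m \<ge> 1" "\<not> has_nesting P (Suc m)"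
  shows "(QB n P B) \<in> Pi_m m (Suc n) \<longleftrightarrow> rk P B < lab P m"
proof -
  have e: "S P (Suc m) = {}" using assms(2) by (simp add: has_nesting_S)
  have "has_nesting (QB n P B) (Suc m) \<longleftrightarrow> (\<exists>t>Max B. t \<in> S P m)"
    using QB_S[of "Suc m"] assms(1) e by (simp add: has_nesting_S)
  also have "\<dots> \<longleftrightarrow> lab P m \<le> rk P B" using cond_iff[OF isp BP] .
  finally show ?thesis using QB_isp by (auto simp: Pi_m_def)
qed

end

lemma Q0_Pi: "\<not> has_nesting P (Suc m) \<Longrightarrow> insert {Suc n} P \<in> Pi_m m (Suc n)"
  using Q0_isp by (simp add: Pi_m_def has_nesting_S Q0_S)

end



lemma QB_inj: assumes isp: "is_set_partition n P" and "B \<in> P" "C \<in> P" "QB n P B = QB n P C"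
  shows "B = C"
proof -
  have "insert (Suc n) B \<in> QB n P B" by (simp add: QB_def)
  then have "insert (Suc n) B \<in> QB n P C" using assms(4) by simp
  moreover have "insert (Suc n) B \<notin> P" using B'_notin[OF isp assms(2)] .
  ultimately have "insert (Suc n) B = insert (Suc n) C" by (simp add: QB_def)
  then show ?thesis using isp_notin[OF isp assms(2)] isp_notin[OF isp assms(3)]
    by (metis Diff_insert_absorb)
qed

lemma Q0_not_QB: assumes isp: "is_set_partition n P" and "B \<in> P"
  shows "QB n P B \<noteq> insert {Suc n} P"
proof
  assume "QB n P B = insert {Suc n} P"
  moreover have "insert (Suc n) B \<in> QB n P B" by (simp add: QB_def)
  ultimately have "insert (Suc n) B \<in> insert {Suc n} P" by simp
  moreover have "insert (Suc n) B \<notin> P" using B'_notin[OF isp assms(2)] .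
  ultimately have "insert (Suc n) B = {Suc n}" by simp
  then have "B \<subseteq> {Suc n}" by blast
  then show False using isp_notin[OF isp assms(2)] isp_ne[OF isp assms(2)] by blast
qed

theorem proposition1:
  fixes m n :: nat and P :: "nat set set"
  assumes "m \<ge> 1" and "P \<in> Pi_m m n"
  defines "a \<equiv> lab P"
  shows "{Q \<in> extensions P n. Q \<in> Pi_m m (Suc n)}
           = insert (add_singleton P n) (add_to_block P n ` {1..<a m}) \<and>
         card {Q \<in> extensions P n. Q \<in> Pi_m m (Suc n)} = a m \<and>
         (\<forall>j\<in>{1..m}. lab (add_singleton P n) j = a j + 1) \<and>
         (\<forall>l. 1 \<le> l \<and> l < a 1 \<longrightarrow>
           lab (add_to_block P n l) 1 = l + 1 \<and>
           (\<forall>i\<in>{2..m}. lab (add_to_block P n l) i = a i)) \<and>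
         (\<forall>j\<in>{2..m}. \<forall>l. a (j - 1) \<le> l \<and> l < a j \<longrightarrow>
           (\<forall>i\<in>{1..m}. lab (add_to_block P n l) i =
              (if i < j then a i + 1 else if i = j then l + 1 else a i)))"
proof -
  have isp: "is_set_partition n P" and nn: "\<not> has_nesting P (Suc m)"
    using assms(2) by (auto simp: Pi_m_def)
  have am1: "a i \<ge> 1" for i unfolding a_def using lab_ge[OF isp] .
  have amc: "a i \<le> card P + 1" for i unfolding a_def using lab_le[OF isp] .
  have mono: "1 \<le> i \<Longrightarrow> i \<le> j \<Longrightarrow> a i \<le> a j" for i j unfolding a_def using lab_mono[OF isp] .
  have atb: "add_to_block P n l = QB n P (blk P l)" for l unfolding add_to_block_def QB_def by simp
  have sing: "add_singleton P n = insert {Suc n} P" by (simp add: add_singleton_def)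
  have ext: "extensions P n = insert (add_singleton P n) (QB n P ` P)"
    unfolding extensions_def QB_def by auto
  have blk1: "blk P l \<in> P" "rk P (blk P l) = l" if "1 \<le> l" "l < a m" for l
    using blk_props[OF isp, of l] that amc[of m] by auto
  have img: "add_to_block P n ` {1..<a m} = QB n P ` {B\<in>P. rk P B < a m}"
  proof
    show "add_to_block P n ` {1..<a m} \<subseteq> QB n P ` {B\<in>P. rk P B < a m}"
    proof
      fix Q assume "Q \<in> add_to_block P n ` {1..<a m}"
      then obtain l where l: "1 \<le> l" "l < a m" "Q = add_to_block P n l" by auto
      then show "Q \<in> QB n P ` {B\<in>P. rk P B < a m}" using blk1[OF l(1,2)] atb by auto
    qed
  next
    show "QB n P ` {B\<in>P. rk P B < a m} \<subseteq> add_to_block P n ` {1..<a m}"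
    proof
      fix Q assume "Q \<in> QB n P ` {B\<in>P. rk P B < a m}"
      then obtain B where B: "B \<in> P" "rk P B < a m" "Q = QB n P B" by auto
      have "Q = add_to_block P n (rk P B)" using B atb blk_rk[OF isp B(1)] by simp
      moreover have "rk P B \<in> {1..<a m}" using B rk_ge1[OF isp B(1)] by simp
      ultimately show "Q \<in> add_to_block P n ` {1..<a m}" by blast
    qed
  qed
  have E: "{Q \<in> extensions P n. Q \<in> Pi_m m (Suc n)} = insert (add_singleton P n) (QB n P ` {B\<in>P. rk P B < a m})"
  proof -
    have "Q \<in> Pi_m m (Suc n) \<longleftrightarrow> rk P B < a m" if "B \<in> P" "Q = QB n P B" for Q B
      using QB_Pi[OF isp that(1) assms(1) nn] that(2) a_def by simp
    moreover have "add_singleton P n \<in> Pi_m m (Suc n)" using Q0_Pi[OF isp nn] sing by simp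
    ultimately show ?thesis unfolding ext by blast
  qed
  have c1: "{Q \<in> extensions P n. Q \<in> Pi_m m (Suc n)} = insert (add_singleton P n) (add_to_block P n ` {1..<a m})"
    using E img by simp
  have inj: "inj_on (add_to_block P n) {1..<a m}"
  proof (rule inj_onI)
    fix l1 l2 assume l: "l1 \<in> {1..<a m}" "l2 \<in> {1..<a m}" "add_to_block P n l1 = add_to_block P n l2"
    then have "blk P l1 = blk P l2" using QB_inj[OF isp] blk1 atb by auto
    then show "l1 = l2" using blk1 l by (metis atLeastLessThan_iff)
  qed
  have nin: "add_singleton P n \<notin> add_to_block P n ` {1..<a m}"
  proof
    assume "add_singleton P n \<in> add_to_block P n ` {1..<a m}"
    then obtain l where l: "1 \<le> l" "l < a m" "add_singleton P n = add_to_block P n l" by auto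
    then have "QB n P (blk P l) = insert {Suc n} P" using atb sing by simp
    then show False using Q0_not_QB[OF isp blk1(1)[OF l(1,2)]] by simp
  qed
  have c2: "card {Q \<in> extensions P n. Q \<in> Pi_m m (Suc n)} = a m"
    unfolding c1 using nin card_image[OF inj] am1[of m] by simp
  have c3: "\<forall>j\<in>{1..m}. lab (add_singleton P n) j = a j + 1"
    using Q0_lab[OF isp] sing a_def by simp
  have labl: "lab (add_to_block P n l) i = (if (if i = 1 then 1 else a (i-1)) \<le> l
     then (if l < a i then l + 1 else a i + 1) else a i)"
    if "1 \<le> l" "l \<le> card P" "i \<ge> 1" for l i
  proof -
    have B: "blk P l \<in> P" "rk P (blk P l) = l" using blk_props[OF isp that(1,2)] by auto
    show ?thesis using QB_lab[OF isp B(1) that(3)] B(2) atb a_def by simp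
  qed
  have c4: "\<forall>l. 1 \<le> l \<and> l < a 1 \<longrightarrow>
           lab (add_to_block P n l) 1 = l + 1 \<and>
           (\<forall>i\<in>{2..m}. lab (add_to_block P n l) i = a i)"
  proof (intro allI impI conjI ballI)
    fix l assume l: "1 \<le> l \<and> l < a 1"
    then have lc: "l \<le> card P" using amc[of 1] by simp
    show "lab (add_to_block P n l) 1 = l + 1" using labl[OF _ lc, of 1] l by simp
    fix i assume i: "i \<in> {2..m}"
    then have "a 1 \<le> a (i-1)" by (intro mono) auto
    then show "lab (add_to_block P n l) i = a i" using labl[OF _ lc, of i] l i by simp
  qed
  have c5: "\<forall>j\<in>{2..m}. \<forall>l. a (j - 1) \<le> l \<and> l < a j \<longrightarrow>
           (\<forall>i\<in>{1..m}. lab (add_to_block P n l) i =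
              (if i < j then a i + 1 else if i = j then l + 1 else a i))"
  proof (intro ballI allI impI)
    fix j l i assume j: "j \<in> {2..m}" and l: "a (j - 1) \<le> l \<and> l < a j" and i: "i \<in> {1..m}"
    have l1: "1 \<le> l" using l am1[of "j-1"] by simp
    have lc: "l \<le> card P" using l amc[of j] by simp
    note L = labl[OF l1 lc, of i]
    show "lab (add_to_block P n l) i = (if i < j then a i + 1 else if i = j then l + 1 else a i)"
    proof (cases "i < j")
      case True
      have "a i \<le> a (j-1)" using True i by (intro mono) auto
      then have ai: "a i \<le> l" using l by simp
      have A: "(if i = 1 then 1 else a (i-1)) \<le> l"
      proof (cases "i = 1")
        case False then have "a (i-1) \<le> a i" using i by (intro mono) auto
        then show ?thesis using ai False by simp
      qed (use l1 in simp)
      show ?thesis using L i A ai True by simp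
    next
      case False
      show ?thesis
      proof (cases "i = j")
        case True then show ?thesis using L i j l by simp
      next
        case ne: False
        then have "a j \<le> a (i-1)" using False j by (intro mono) auto
        then show ?thesis using L i j l False ne by simp
      qed
    qed
  qed
  show ?thesis using c1 c2 c3 c4 c5 by blast
qed


end
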